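(* Let $n\ge2$, $0<\eta\le\frac14$, and let $A$ be a real symmetric non-negative $n\times n$ matrix with $\det(A)\ge(1-\sqrt\eta)^2$ and $\operatorname{tr}(A)\le n(1+\eta)^{2/n}$. Then $$\|A-\mathrm{Id}\|^2\le4(n-1)^2\sqrt\eta\left(1+\frac{n+10}n\sqrt\eta\right).$$
   Context: $\|\cdot\|$ denotes the Hilbert–Schmidt (Frobenius) norm, $\|B\|^2=\operatorname{tr}(B^tB)$. *)

theory Defs
  imports "HOL-Analysis.Analysis"
begin

definition hs_norm_sq :: "real^'n^'n \<Rightarrow> real" where
  "hs_norm_sq B = trace (transpose B ** B)"

text \<open>Non-negative (positive semidefinite) matrix.\<close>
definition psd :: "real^'n^'n \<Rightarrow> bool" where
  "psd A \<longleftrightarrow> (\<forall>x. 0 \<le> x \<bullet> (A *v x))"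

end

theory Submission
  imports Defs "Jordan_Normal_Form.Schur_Decomposition"
begin

lemma pairs_amgm:
  fixes x :: "nat \<Rightarrow> real" and n :: nat
  assumes n: "n \<ge> 2" and pos: "\<And>i. i < n \<Longrightarrow> 0 < x i"
  shows "real n * (real n - 1) * (\<Prod>i<n. x i) powr (2 / real n)
         \<le> (\<Sum>i<n. x i)^2 - (\<Sum>i<n. (x i)^2)"
proof -
  define T where "T = Sigma {..<n} (\<lambda>i. {..<n} - {i})"
  have finT: "finite T" unfolding T_def by auto
  have cardT: "card T = n * (n - 1)"
    unfolding T_def by (simp add: card_SigmaI)
  have Tne: "T \<noteq> {}" using cardT n by auto
  define P where "P = (\<Prod>i<n. x i)"
  have Ppos: "P > 0" unfolding P_def by (rule prod_pos) (use pos in auto)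
  have prod1: "(\<Prod>(i,j)\<in>T. x i) = P ^ (n - 1)"
  proof -
    have "(\<Prod>(i,j)\<in>T. x i) = (\<Prod>i<n. \<Prod>j\<in>{..<n} - {i}. x i)"
      unfolding T_def by (subst prod.Sigma) auto
    also have "\<dots> = (\<Prod>i<n. x i ^ (n - 1))" by (simp add: card_Diff_singleton)
    also have "\<dots> = P ^ (n - 1)" unfolding P_def by (simp add: prod_power_distrib)
    finally show ?thesis .
  qed
  have prod2: "(\<Prod>(i,j)\<in>T. x j) = (\<Prod>(i,j)\<in>T. x i)"
    by (rule prod.reindex_bij_witness[where i="\<lambda>(i,j). (j,i)" and j="\<lambda>(i,j). (j,i)"])
       (auto simp: T_def)
  have prodT: "(\<Prod>(i,j)\<in>T. x i * x j) = P ^ (2 * (n - 1))"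
  proof -
    have "(\<Prod>(i,j)\<in>T. x i * x j) = (\<Prod>(i,j)\<in>T. x i) * (\<Prod>(i,j)\<in>T. x j)"
      by (simp add: prod.distrib case_prod_beta)
    thus ?thesis using prod1 prod2 by (simp add: power_mult power2_eq_square mult_2 power_add)
  qed
  have sumT: "(\<Sum>(i,j)\<in>T. x i * x j) = (\<Sum>i<n. x i)^2 - (\<Sum>i<n. (x i)^2)"
  proof -
    have "(\<Sum>(i,j)\<in>T. x i * x j) = (\<Sum>i<n. \<Sum>j\<in>{..<n} - {i}. x i * x j)"
      unfolding T_def by (subst sum.Sigma) auto
    also have "\<dots> = (\<Sum>i<n. x i * ((\<Sum>j<n. x j) - x i))"
      by (simp add: sum_distrib_left[symmetric] sum_diff1)
    also have "\<dots> = (\<Sum>i<n. x i * (\<Sum>j<n. x j)) - (\<Sum>i<n. (x i)^2)"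
      by (simp add: algebra_simps power2_eq_square sum_subtractf)
    also have "\<dots> = (\<Sum>i<n. x i)^2 - (\<Sum>i<n. (x i)^2)"
      by (simp add: sum_distrib_right[symmetric] power2_eq_square)
    finally show ?thesis .
  qed
  have am: "(\<Sum>p\<in>T. (case p of (i,j) \<Rightarrow> x i * x j) / card T) \<ge> (\<Prod>p\<in>T. (case p of (i,j) \<Rightarrow> x i * x j)) powr (1 / card T)"
    by (rule arith_geom_mean[OF finT Tne]) (auto simp: T_def intro!: mult_nonneg_nonneg less_imp_le pos mult_pos_pos)
  have lhs: "(\<Sum>p\<in>T. (case p of (i,j) \<Rightarrow> x i * x j) / card T) = ((\<Sum>i<n. x i)^2 - (\<Sum>i<n. (x i)^2)) / card T"
    using sumT by (simp add: sum_divide_distrib[symmetric] case_prod_beta)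
  have "(\<Prod>p\<in>T. (case p of (i,j) \<Rightarrow> x i * x j)) powr (1 / card T) = (P ^ (2 * (n - 1))) powr (1 / card T)"
    using prodT by (simp add: case_prod_beta)
  also have "\<dots> = P powr (real (2 * (n - 1)) * (1 / card T))"
    using Ppos by (simp add: powr_realpow[symmetric] powr_powr)
  also have "real (2 * (n - 1)) * (1 / card T) = 2 / real n"
    using n unfolding cardT by (simp add: of_nat_diff field_simps)
  finally have rhs: "(\<Prod>p\<in>T. (case p of (i,j) \<Rightarrow> x i * x j)) powr (1 / card T) = P powr (2 / real n)" .
  have cT: "real (card T) = real n * (real n - 1)" using n unfolding cardT by (simp add: of_nat_diff)
  have cTpos: "real (card T) > 0" using cT n by simp
  from am lhs rhs have "P powr (2 / real n) \<le> ((\<Sum>i<n. x i)^2 - (\<Sum>i<n. (x i)^2)) / card T" by simp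
  hence "card T * P powr (2 / real n) \<le> (\<Sum>i<n. x i)^2 - (\<Sum>i<n. (x i)^2)"
    using cTpos by (simp add: field_simps)
  thus ?thesis unfolding P_def cT by simp
qed

lemma c_bound:
  fixes N \<eta> :: real
  assumes "N \<ge> 2" "0 < \<eta>" "\<eta> \<le> 1/4"
  shows "(1 + \<eta>) powr (2 / N) \<le> 1 + 4 * \<eta> / N"
proof -
  have "(1 + \<eta>) powr (2 / N) = exp (2 / N * ln (1 + \<eta>))"
    using assms by (simp add: powr_def)
  also have "\<dots> \<le> exp (2 * \<eta> / N)"
  proof -
    have "ln (1 + \<eta>) \<le> \<eta>" using assms by (intro ln_add_one_self_le_self) auto
    hence "2 / N * ln (1 + \<eta>) \<le> 2 / N * \<eta>" using assms by (intro mult_left_mono) auto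
    thus ?thesis by simp
  qed
  also have "\<dots> \<le> 1 + 2 * (2 * \<eta> / N)"
    using assms by (intro real_exp_bound_lemma) (auto simp: field_simps)
  finally show ?thesis by simp
qed

lemma d_bound:
  fixes N y :: real
  assumes "N \<ge> 2" "0 < y" "y \<le> 1/2"
  shows "((1 - y)^2) powr (2 / N) \<ge> 1 - 4 * (y + 2 * y^2) / N"
proof -
  have "((1 - y)^2) powr (2 / N) = exp (2 / N * ln ((1 - y)^2))"
    using assms by (simp add: powr_def)
  also have "ln ((1 - y)^2) = 2 * ln (1 - y)" using assms by (simp add: ln_realpow)
  finally have e: "((1 - y)^2) powr (2 / N) = exp (4 / N * ln (1 - y))" by simp
  have "- y - 2 * y^2 \<le> ln (1 - y)" using assms by (intro ln_one_minus_pos_lower_bound) auto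
  hence "4 / N * (- y - 2 * y^2) \<le> 4 / N * ln (1 - y)" using assms by (intro mult_left_mono) auto
  moreover have "1 + 4 / N * ln (1 - y) \<le> exp (4 / N * ln (1 - y))" by (rule exp_ge_add_one_self)
  moreover have "4 / N * (- y - 2 * y^2) = - (4 * (y + 2 * y^2) / N)" using assms by (auto simp: field_simps)
  ultimately show ?thesis unfolding e by linarith
qed

lemma final_alg:
  fixes N y u :: real
  assumes N: "N \<ge> 2" and y: "0 < y" "y \<le> 1/2" and u: "0 \<le> u" "u \<le> 4 * y^2 / N"
  shows "N*(N-1)*((1+u)^2 - 1) + N*u^2 + 4*(N-1)*(y + 2*y^2)
         \<le> 4 * (N - 1)^2 * y * (1 + (N + 10) / N * y)"
proof -
  have y2: "y^2 \<le> 1/4"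
  proof -
    have "y * y \<le> (1/2) * (1/2)" using y by (intro mult_mono) auto
    thus ?thesis by (simp add: power2_eq_square)
  qed
  have y2n: "0 \<le> y^2" by simp
  have ub: "4 * y^2 / N \<le> 1/2" using N y2 by (simp add: field_simps)
  have A1: "u * (2 + u) \<le> (4 * y^2 / N) * (5/2)"
    using u ub by (intro mult_mono) auto
  have "N*(N-1)*((1+u)^2 - 1) = N*(N-1)*(u*(2+u))" by (simp add: algebra_simps power2_eq_square)
  also have "\<dots> \<le> N*(N-1)*((4 * y^2 / N) * (5/2))"
    using A1 N by (intro mult_left_mono) auto
  also have "\<dots> = 10*(N-1)*y^2" using N by (simp add: field_simps)
  finally have B1: "N*(N-1)*((1+u)^2 - 1) \<le> 10*(N-1)*y^2" .
  have "u^2 \<le> (4 * y^2 / N)^2" using u by (intro power_mono) auto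
  hence "N*u^2 \<le> N*(4 * y^2 / N)^2" using N by (intro mult_left_mono) auto
  also have "\<dots> = 16 * y^2 * y^2 / N" using N by (simp add: field_simps power2_eq_square)
  also have "\<dots> \<le> 16 * y^2 * (1/4) / N"
    using N y2 by (intro divide_right_mono mult_left_mono) auto
  also have "\<dots> \<le> 2 * y^2"
  proof -
    have "2 * y^2 \<le> N * y^2" using N by (intro mult_right_mono) auto
    thus ?thesis using N by (simp add: field_simps)
  qed
  also have "\<dots> \<le> 2 * (N-1) * y^2"
  proof -
    have "1 * y^2 \<le> (N-1) * y^2" using N by (intro mult_right_mono) auto
    thus ?thesis by (simp add: algebra_simps)
  qed
  finally have B2: "N*u^2 \<le> 2*(N-1)*y^2" .
  have C1: "(N-1) * y \<le> (N-1)^2 * y"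
    using N y by (intro mult_right_mono) (auto simp: power2_eq_square)
  have "2 * 2 \<le> N * N" using N by (intro mult_mono) auto
  hence "6 * N \<le> (N-1)*(N+10)" using N by (simp add: algebra_simps)
  hence "6 \<le> (N-1)*(N+10)/N" using N by (simp add: field_simps)
  hence "6 * (N-1) \<le> (N-1)*(N+10)/N * (N-1)" using N by (intro mult_right_mono) auto
  hence C2: "6 * (N-1) * y^2 \<le> (N-1)^2*(N+10)/N * y^2"
    using y2n by (intro mult_right_mono) (auto simp: power2_eq_square field_simps)
  have R: "4 * (N - 1)^2 * y * (1 + (N + 10) / N * y) = 4*((N-1)^2*y) + 4*((N-1)^2*(N+10)/N*y^2)"
    using N by (simp add: field_simps power2_eq_square)
  have E: "4*(N-1)*(y + 2*y^2) = 4*((N-1)*y) + 8*((N-1)*y^2)" by (simp add: algebra_simps)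
  have lin: "\<And>P1 P2 a b c d::real. P1 \<le> 10*b \<Longrightarrow> P2 \<le> 2*b \<Longrightarrow> a \<le> c \<Longrightarrow> 6*b \<le> d \<Longrightarrow> 0 \<le> b
     \<Longrightarrow> P1 + P2 + (4*a+8*b) \<le> 4*c + 4*d" by linarith
  have B1': "N*(N-1)*((1+u)^2 - 1) \<le> 10*((N-1)*y^2)" using B1 by (simp only: mult.assoc)
  have B2': "N*u^2 \<le> 2*((N-1)*y^2)" using B2 by (simp only: mult.assoc)
  have C2': "6*((N-1)*y^2) \<le> (N-1)^2*(N+10)/N*y^2" using C2 by (simp only: mult.assoc)
  show ?thesis unfolding R E by (rule lin[OF B1' B2' C1 C2']) (use N in simp)
qed

lemma real_core:
  fixes x :: "nat \<Rightarrow> real" and n :: nat and \<eta> :: real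
  assumes n: "n \<ge> 2" and eta: "0 < \<eta>" "\<eta> \<le> 1/4" and nn: "\<And>i. i < n \<Longrightarrow> 0 \<le> x i"
    and P: "(\<Prod>i<n. x i) \<ge> (1 - sqrt \<eta>)^2"
    and S: "(\<Sum>i<n. x i) \<le> real n * (1 + \<eta>) powr (2 / real n)"
  shows "(\<Sum>i<n. (x i - 1)^2) \<le> 4 * (real n - 1)^2 * sqrt \<eta> * (1 + (real n + 10) / real n * sqrt \<eta>)"
proof -
  define N where "N = real n"
  define y where "y = sqrt \<eta>"
  have N2: "N \<ge> 2" using n unfolding N_def by simp
  have y0: "0 < y" using eta unfolding y_def by simp
  have yh: "y \<le> 1/2"
  proof -
    have "sqrt \<eta> \<le> sqrt (1/4)" using eta by (intro real_sqrt_le_mono) auto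
    also have "sqrt (1/4) = (1/2::real)" by (simp add: real_sqrt_divide)
    finally show ?thesis unfolding y_def .
  qed
  have eta_y: "\<eta> = y^2" unfolding y_def using eta by simp
  have P0: "(1 - y)^2 > 0" using yh by simp
  have pos: "0 < x i" if "i < n" for i
  proof (rule ccontr)
    assume "\<not> 0 < x i"
    hence "x i = 0" using nn[OF that] by simp
    hence z: "(\<Prod>i<n. x i) = 0" using that by (intro prod_zero) auto
    show False using P P0 z unfolding y_def by linarith
  qed
  define s where "s = (\<Sum>i<n. x i)"
  define q where "q = (\<Sum>i<n. (x i)^2)"
  define c where "c = (1 + \<eta>) powr (2 / N)"
  define d where "d = (\<Prod>i<n. x i) powr (2 / N)"
  have am: "N * (N - 1) * d \<le> s^2 - q"
    using pairs_amgm[OF n pos] unfolding N_def d_def s_def q_def by simp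
  have dD: "((1 - y)^2) powr (2 / N) \<le> d"
    unfolding d_def using P P0 N2 unfolding y_def by (intro powr_mono2) auto
  have D: "1 - 4 * (y + 2 * y^2) / N \<le> d" using d_bound[OF N2 y0 yh] dD by linarith
  have sumeq: "(\<Sum>i<n. (x i - 1)^2) = q - 2 * s + N"
    unfolding q_def s_def N_def by (simp add: power2_diff sum.distrib sum_subtractf sum_distrib_left)
  have c1: "c \<ge> 1" unfolding c_def using eta N2 by (intro ge_one_powr_ge_zero) auto
  have cb: "c \<le> 1 + 4 * \<eta> / N" unfolding c_def by (rule c_bound[OF N2 eta])
  have s0: "0 \<le> s" unfolding s_def using nn by (intro sum_nonneg) auto
  have sC: "s \<le> N * c" using S unfolding s_def N_def c_def .
  have sq: "s^2 - 2 * s \<le> (N*c)^2 - 2*(N*c)"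
  proof -
    have "0 \<le> (N*c - s) * (N*c + s - 2)"
    proof (rule mult_nonneg_nonneg)
      show "0 \<le> N*c - s" using sC by simp
      have "2 \<le> N * c" using N2 c1 by (metis mult_mono mult.right_neutral le_numeral_extra(1) order_trans zero_le_numeral dual_order.trans)
      thus "0 \<le> N*c + s - 2" using s0 by simp
    qed
    thus ?thesis by (simp add: algebra_simps power2_eq_square)
  qed
  define u where "u = c - 1"
  have u0: "0 \<le> u" using c1 unfolding u_def by simp
  have ub: "u \<le> 4 * y^2 / N" using cb unfolding u_def eta_y by simp
  have "(\<Sum>i<n. (x i - 1)^2) \<le> s^2 - N*(N-1)*d - 2 * s + N" using sumeq am by simp
  also have "\<dots> \<le> (N*c)^2 - 2*(N*c) + N - N*(N-1)*(1 - 4 * (y + 2 * y^2) / N)"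
  proof -
    have "N*(N-1)*(1 - 4 * (y + 2 * y^2) / N) \<le> N*(N-1)*d" using D N2 by (intro mult_left_mono) auto
    thus ?thesis using sq by simp
  qed
  also have "\<dots> = N*(N-1)*((1+u)^2 - 1) + N*u^2 + 4*(N-1)*(y + 2*y^2)"
    unfolding u_def using N2 by (simp add: field_simps power2_eq_square)
  also have "\<dots> \<le> 4 * (N - 1)^2 * y * (1 + (N + 10) / N * y)"
    by (rule final_alg[OF N2 y0 yh u0 ub])
  finally show ?thesis unfolding N_def y_def .
qed

lemma eig_core:
  fixes a :: "nat \<Rightarrow> nat \<Rightarrow> real" and n :: nat and e :: complex and v :: "nat \<Rightarrow> complex"
  assumes sym: "\<And>i j. i < n \<Longrightarrow> j < n \<Longrightarrow> a i j = a j i"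
    and psd: "\<And>w :: nat \<Rightarrow> real. 0 \<le> (\<Sum>i<n. \<Sum>j<n. w i * a i j * w j)"
    and eqi: "\<And>i. i < n \<Longrightarrow> (\<Sum>j<n. complex_of_real (a i j) * v j) = e * v i"
    and nz: "i0 < n" "v i0 \<noteq> 0"
  shows "Im e = 0 \<and> Re e \<ge> 0"
proof -
  define r where "r i = Re (v i)" for i
  define m where "m i = Im (v i)" for i
  define S where "S = (\<Sum>i<n. \<Sum>j<n. cnj (v i) * (complex_of_real (a i j) * v j))"
  define K where "K = (\<Sum>i<n. (cmod (v i))^2)"
  have S1: "S = e * complex_of_real K"
  proof -
    have "S = (\<Sum>i<n. cnj (v i) * (e * v i))"
      unfolding S_def by (intro sum.cong refl) (simp only: sum_distrib_left[symmetric] eqi lessThan_iff)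
    also have "\<dots> = e * (\<Sum>i<n. cnj (v i) * v i)"
      by (simp only: sum_distrib_left mult.left_commute)
    also have "(\<Sum>i<n. cnj (v i) * v i) = complex_of_real K"
    proof -
      have cz: "cnj z * z = complex_of_real ((cmod z)^2)" for z
        by (simp add: complex_eq_iff cmod_power2 flip: power2_eq_square)
      show ?thesis unfolding K_def by (simp add: cz)
    qed
    finally show ?thesis .
  qed
  have t1: "Re (cnj z * (complex_of_real c * w)) = c * (Re z * Re w) + c * (Im z * Im w)" for z w c
    by (simp add: algebra_simps)
  have t2: "Im (cnj z * (complex_of_real c * w)) = c * (Re z * Im w) - c * (Im z * Re w)" for z w c
    by (simp add: algebra_simps)
  have ReS: "Re S = (\<Sum>i<n. \<Sum>j<n. r i * a i j * r j) + (\<Sum>i<n. \<Sum>j<n. m i * a i j * m j)"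
  proof -
    have "Re S = (\<Sum>i<n. \<Sum>j<n. a i j * (r i * r j) + a i j * (m i * m j))"
      unfolding S_def r_def m_def by (simp only: Re_sum t1)
    also have "\<dots> = (\<Sum>i<n. \<Sum>j<n. r i * a i j * r j) + (\<Sum>i<n. \<Sum>j<n. m i * a i j * m j)"
      by (simp only: sum.distrib[symmetric]) (simp only: mult.commute mult.left_commute)
    finally show ?thesis .
  qed
  have ImS: "Im S = 0"
  proof -
    have "Im S = (\<Sum>i<n. \<Sum>j<n. a i j * (r i * m j) - a i j * (m i * r j))"
      unfolding S_def r_def m_def by (simp only: Im_sum t2)
    also have "\<dots> = (\<Sum>i<n. \<Sum>j<n. a i j * (r i * m j)) - (\<Sum>i<n. \<Sum>j<n. a i j * (m i * r j))"
      by (simp only: sum_subtractf)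
    also have "(\<Sum>i<n. \<Sum>j<n. a i j * (m i * r j)) = (\<Sum>j<n. \<Sum>i<n. a i j * (m i * r j))"
      by (rule sum.swap)
    also have "\<dots> = (\<Sum>i<n. \<Sum>j<n. a i j * (r i * m j))"
      by (intro sum.cong refl) (simp add: sym mult.commute)
    finally show ?thesis by simp
  qed
  have Kpos: "K > 0"
  proof -
    have "0 < (cmod (v i0))^2" using nz by simp
    also have "\<dots> \<le> K" unfolding K_def using nz by (intro member_le_sum) auto
    finally show ?thesis .
  qed
  have ReS0: "Re S \<ge> 0" unfolding ReS using psd[of r] psd[of m] by simp
  have "Im S = Im e * K" "Re S = Re e * K" using S1 by simp_all
  hence "Im e * K = 0" "Re e * K \<ge> 0" using ImS ReS0 by simp_all
  thus ?thesis using Kpos by (simp add: zero_le_mult_iff)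
qed

lemma tr_comm:
  fixes X Y :: "'a::comm_ring_1 mat"
  assumes X: "X \<in> carrier_mat n n" and Y: "Y \<in> carrier_mat n n"
  shows "(\<Sum>i<n. (X * Y) $$ (i,i)) = (\<Sum>i<n. (Y * X) $$ (i,i))"
proof -
  have "(\<Sum>i<n. (X * Y) $$ (i,i)) = (\<Sum>i<n. \<Sum>k<n. X $$ (i,k) * Y $$ (k,i))"
    using X Y by (intro sum.cong refl) (auto simp: scalar_prod_def lessThan_atLeast0)
  also have "\<dots> = (\<Sum>k<n. \<Sum>i<n. X $$ (i,k) * Y $$ (k,i))" by (rule sum.swap)
  also have "\<dots> = (\<Sum>i<n. (Y * X) $$ (i,i))"
    using X Y by (intro sum.cong refl) (auto simp: scalar_prod_def lessThan_atLeast0 mult.commute)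
  finally show ?thesis .
qed

lemma spectral_data:
  fixes a :: "nat \<Rightarrow> nat \<Rightarrow> real" and n :: nat
  assumes sym: "\<And>i j. i < n \<Longrightarrow> j < n \<Longrightarrow> a i j = a j i"
    and psd: "\<And>w :: nat \<Rightarrow> real. 0 \<le> (\<Sum>i<n. \<Sum>j<n. w i * a i j * w j)"
  shows "\<exists>x::nat\<Rightarrow>real. (\<forall>i<n. 0 \<le> x i) \<and> (\<Sum>i<n. x i) = (\<Sum>i<n. a i i)
     \<and> (\<Prod>i<n. x i) = (\<Sum>p\<in>{p. p permutes {..<n}}. of_int (sign p) * (\<Prod>i<n. a i (p i)))
     \<and> (\<Sum>i<n. (x i)^2) = (\<Sum>i<n. \<Sum>k<n. a i k * a k i)"
proof -
  define M where "M = Matrix.mat n n (\<lambda>(i,j). complex_of_real (a i j))"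
  have Mc: "M \<in> carrier_mat n n" unfolding M_def by simp
  obtain es where cp: "char_poly M = (\<Prod>e\<leftarrow>es. [:- e, 1:])" and len: "length es = n"
    using char_poly_factorized[OF Mc] by blast
  obtain B P Q where sd: "schur_decomposition M es = (B,P,Q)" by (cases "schur_decomposition M es") auto
  from schur_decomposition[OF Mc cp sd]
  have sim: "similar_mat_wit M B P Q" and ut: "upper_triangular B" and dg: "diag_mat B = es" by auto
  note simD = similar_mat_witD2[OF Mc sim]
  have Bc: "B \<in> carrier_mat n n" and Pc: "P \<in> carrier_mat n n" and Qc: "Q \<in> carrier_mat n n"
    using simD by auto
  have PQ: "P * Q = 1\<^sub>m n" and QP: "Q * P = 1\<^sub>m n" and MPBQ: "M = P * B * Q" using simD by auto
  have inset: "B $$ (i,i) \<in> set es" if "i < n" for i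
    using that Bc unfolding dg[symmetric] diag_mat_def by auto
  have eigB: "Im (B $$ (i,i)) = 0 \<and> Re (B $$ (i,i)) \<ge> 0" if i: "i < n" for i
  proof -
    define e where "e = B $$ (i,i)"
    have "poly (char_poly M) e = 0"
    proof -
      have "e \<in> set es" using inset[OF i] unfolding e_def .
      hence "0 \<in> set (map (\<lambda>p. poly p e) (map (\<lambda>e'. [:- e', 1:]) es))" by force
      thus ?thesis unfolding cp by (simp add: poly_prod_list prod_list_zero_iff)
    qed
    hence "eigenvalue M e" using eigenvalue_root_char_poly[OF Mc] by simp
    then obtain v where v: "eigenvector M v e" unfolding eigenvalue_def by blast
    have vc: "v \<in> carrier_vec n" and vnz: "v \<noteq> 0\<^sub>v n" and Mv: "M *\<^sub>v v = e \<cdot>\<^sub>v v"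
      using v Mc unfolding eigenvector_def by auto
    have dv: "dim_vec v = n" using vc by auto
    have eqi: "(\<Sum>j<n. complex_of_real (a i j) * v $ j) = e * v $ i" if i: "i < n" for i
    proof -
      have "(M *\<^sub>v v) $ i = e * v $ i" using Mv i dv by simp
      moreover have "(M *\<^sub>v v) $ i = (\<Sum>j<n. complex_of_real (a i j) * v $ j)"
        using i dv unfolding M_def by (simp add: scalar_prod_def lessThan_atLeast0)
      ultimately show ?thesis by simp
    qed
    obtain i0 where i0: "i0 < n" "v $ i0 \<noteq> 0"
      using vnz vc by (metis eq_vecI carrier_vecD index_zero_vec)
    show ?thesis using eig_core[of n a "\<lambda>j. v $ j" e i0, OF sym psd eqi i0] unfolding e_def by blast
  qed
  define x where "x i = Re (B $$ (i,i))" for i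
  have Bx: "B $$ (i,i) = complex_of_real (x i)" if "i < n" for i
    using eigB[OF that] unfolding x_def by (simp add: complex_eq_iff)
  define tr where "tr X = (\<Sum>i<n. X $$ (i,i))" for X :: "complex mat"
  have trsim: "tr (P * X * Q) = tr X" if X: "X \<in> carrier_mat n n" for X
  proof -
    have "tr (P * X * Q) = tr (Q * (P * X))" unfolding tr_def using X Pc Qc by (intro tr_comm) auto
    also have "Q * (P * X) = (Q * P) * X" using X Pc Qc by (simp add: assoc_mult_mat)
    also have "\<dots> = X" using QP X by simp
    finally show ?thesis .
  qed
  have "tr M = tr B" unfolding MPBQ using trsim[OF Bc] .
  moreover have "tr M = complex_of_real (\<Sum>i<n. a i i)" unfolding tr_def M_def by simp
  moreover have "tr B = complex_of_real (\<Sum>i<n. x i)" unfolding tr_def by (simp add: Bx)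
  ultimately have "complex_of_real (\<Sum>i<n. x i) = complex_of_real (\<Sum>i<n. a i i)" by metis
  hence T1: "(\<Sum>i<n. x i) = (\<Sum>i<n. a i i)" by (rule of_real_eq_iff[THEN iffD1])
  have "M * M = P * (B * B) * Q"
  proof -
    have "M * M = P * B * (Q * P) * B * Q" unfolding MPBQ using Pc Bc Qc
      by (simp add: assoc_mult_mat[of _ n n _ n _ n] mult_carrier_mat)
    also have "\<dots> = P * (B * B) * Q" using QP Pc Bc Qc
      by (simp add: assoc_mult_mat[of _ n n _ n _ n] mult_carrier_mat)
    finally show ?thesis .
  qed
  hence "tr (M * M) = tr (B * B)" using trsim[of "B * B"] Bc by simp
  moreover have "tr (M * M) = complex_of_real (\<Sum>i<n. \<Sum>k<n. a i k * a k i)"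
    unfolding tr_def M_def by (simp add: scalar_prod_def lessThan_atLeast0)
  moreover have "tr (B * B) = complex_of_real (\<Sum>i<n. (x i)^2)"
  proof -
    have "(B * B) $$ (i,i) = complex_of_real ((x i)^2)" if i: "i < n" for i
    proof -
      have "(B * B) $$ (i,i) = (\<Sum>k<n. B $$ (i,k) * B $$ (k,i))"
        using i Bc by (simp add: scalar_prod_def lessThan_atLeast0)
      also have "\<dots> = (\<Sum>k<n. if k = i then B $$ (i,i) * B $$ (i,i) else 0)"
      proof (rule sum.cong[OF refl])
        fix k assume k: "k \<in> {..<n}"
        show "B $$ (i,k) * B $$ (k,i) = (if k = i then B $$ (i,i) * B $$ (i,i) else 0)"
        proof (cases "k < i")
          case True thus ?thesis using ut i Bc by (auto simp: upper_triangular_def)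
        next
          case False
          show ?thesis
          proof (cases "k = i")
            case False
            hence "i < k" using \<open>\<not> k < i\<close> by simp
            thus ?thesis using ut k Bc False by (auto simp: upper_triangular_def)
          qed simp
        qed
      qed
      also have "\<dots> = B $$ (i,i) * B $$ (i,i)" using i by simp
      finally show ?thesis using Bx[OF i] by (simp add: power2_eq_square)
    qed
    thus ?thesis unfolding tr_def by simp
  qed
  ultimately have "complex_of_real (\<Sum>i<n. (x i)^2) = complex_of_real (\<Sum>i<n. \<Sum>k<n. a i k * a k i)" by metis
  hence T2: "(\<Sum>i<n. (x i)^2) = (\<Sum>i<n. \<Sum>k<n. a i k * a k i)" by (rule of_real_eq_iff[THEN iffD1])
  have "Determinant.det M = Determinant.det B" using sim unfolding similar_mat_def by (intro det_similar) (auto simp: similar_mat_def)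
  also have "Determinant.det B = (\<Prod>i = 0..<n. B $$ (i,i))"
  proof -
    have dB: "dim_row B = n" using Bc by auto
    show ?thesis unfolding det_upper_triangular[OF ut Bc] prod_list_diag_prod dB ..
  qed
  also have "\<dots> = complex_of_real (\<Prod>i<n. x i)" by (simp add: Bx lessThan_atLeast0)
  finally have dM: "Determinant.det M = complex_of_real (\<Prod>i<n. x i)" .
  have "Determinant.det M = (\<Sum>p\<in>{p. p permutes {0..<n}}. of_int (sign p) * (\<Prod>i = 0..<n. M $$ (i, p i)))"
    by (rule det_def'[OF Mc])
  also have "\<dots> = (\<Sum>p\<in>{p. p permutes {0..<n}}. complex_of_real (of_int (sign p) * (\<Prod>i = 0..<n. a i (p i))))"
  proof (rule sum.cong[OF refl])
    fix p assume "p \<in> {p. p permutes {0..<n}}"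
    hence p: "p permutes {0..<n}" by simp
    have "(\<Prod>i = 0..<n. M $$ (i, p i)) = (\<Prod>i = 0..<n. complex_of_real (a i (p i)))"
      unfolding M_def by (intro prod.cong refl) (use permutes_in_image[OF p] in auto)
    thus "of_int (sign p) * (\<Prod>i = 0..<n. M $$ (i, p i)) = complex_of_real (of_int (sign p) * (\<Prod>i = 0..<n. a i (p i)))"
      by simp
  qed
  also have "\<dots> = complex_of_real (\<Sum>p\<in>{p. p permutes {..<n}}. of_int (sign p) * (\<Prod>i<n. a i (p i)))"
    by (simp add: lessThan_atLeast0)
  finally have "complex_of_real (\<Prod>i<n. x i) = complex_of_real (\<Sum>p\<in>{p. p permutes {..<n}}. of_int (sign p) * (\<Prod>i<n. a i (p i)))"
    using dM by metis
  hence T3: "(\<Prod>i<n. x i) = (\<Sum>p\<in>{p. p permutes {..<n}}. of_int (sign p) * (\<Prod>i<n. a i (p i)))"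
    by (rule of_real_eq_iff[THEN iffD1])
  have T0: "\<forall>i<n. 0 \<le> x i" using eigB unfolding x_def by simp
  show ?thesis using T0 T1 T2 T3 by blast
qed

lemma H1:
  fixes A :: "'a::comm_semiring_1^'n^'n"
  assumes h: "bij_betw h {..<CARD('n)} (UNIV::'n set)"
  shows "trace A = (\<Sum>i<CARD('n). A $ h i $ h i)"
  unfolding trace_def using sum.reindex_bij_betw[OF h, of "\<lambda>a. A $ a $ a"] by simp

lemma H2:
  fixes A :: "'a::comm_semiring_1^'n^'n"
  assumes h: "bij_betw h {..<CARD('n)} (UNIV::'n set)"
  shows "trace (A ** A) = (\<Sum>i<CARD('n). \<Sum>k<CARD('n). A $ h i $ h k * A $ h k $ h i)"
proof -
  have R: "\<And>g. sum g UNIV = (\<Sum>x<CARD('n). g (h x))" by (rule sum.reindex_bij_betw[OF h, symmetric])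
  have "trace (A ** A) = (\<Sum>i<CARD('n). (A ** A) $ h i $ h i)" by (rule H1[OF h])
  also have "\<dots> = (\<Sum>i<CARD('n). \<Sum>k<CARD('n). A $ h i $ h k * A $ h k $ h i)"
    unfolding matrix_matrix_mult_def by (simp only: R vec_lambda_beta)
  finally show ?thesis .
qed

lemma H4:
  fixes A :: "real^'n^'n"
  assumes h: "bij_betw h {..<CARD('n)} (UNIV::'n set)" and p: "psd A"
  shows "0 \<le> (\<Sum>i<CARD('n). \<Sum>j<CARD('n). w i * A $ h i $ h j * w j)"
proof -
  define g where "g = inv_into {..<CARD('n)} h"
  define x :: "real^'n" where "x = (\<chi> a. w (g a))"
  have gh: "g (h i) = i" if "i < CARD('n)" for i
    unfolding g_def using h that by (simp add: bij_betw_inv_into_left)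
  have "0 \<le> x \<bullet> (A *v x)" using p unfolding psd_def by blast
  also have "x \<bullet> (A *v x) = (\<Sum>a\<in>UNIV. \<Sum>b\<in>UNIV. x $ a * A $ a $ b * x $ b)"
    unfolding inner_vec_def matrix_vector_mult_def by (simp add: sum_distrib_left mult.assoc)
  also have "\<dots> = (\<Sum>i<CARD('n). \<Sum>j<CARD('n). w i * A $ h i $ h j * w j)"
  proof -
    have R: "\<And>g. sum g UNIV = (\<Sum>x<CARD('n). g (h x))" by (rule sum.reindex_bij_betw[OF h, symmetric])
    show ?thesis unfolding x_def by (simp only: R vec_lambda_beta) (auto simp: gh intro!: sum.cong)
  qed
  finally show ?thesis .
qed

lemma H6:
  fixes A :: "real^'n^'n"
  assumes s: "Finite_Cartesian_Product.transpose A = A"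
  shows "hs_norm_sq (A - Finite_Cartesian_Product.mat 1) = trace (A ** A) - 2 * trace A + real CARD('n)"
proof -
  have td: "Finite_Cartesian_Product.transpose (X - Y) = Finite_Cartesian_Product.transpose X - Finite_Cartesian_Product.transpose Y" for X Y :: "real^'n^'n"
    by (simp add: transpose_def Finite_Cartesian_Product.vec_eq_iff)
  have t: "Finite_Cartesian_Product.transpose (A - Finite_Cartesian_Product.mat 1) = A - Finite_Cartesian_Product.mat 1" by (simp only: td s transpose_mat)
  have ld: "X ** (Y - Z) = X ** Y - X ** Z" for X Y Z :: "real^'n^'n"
    by (vector matrix_matrix_mult_def sum_subtractf[symmetric] field_simps)
  have rd: "(Y - Z) ** X = Y ** X - Z ** X" for X Y Z :: "real^'n^'n"
    by (vector matrix_matrix_mult_def sum_subtractf[symmetric] field_simps)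
  have "(A - Finite_Cartesian_Product.mat 1) ** (A - Finite_Cartesian_Product.mat 1) = A ** A - A - A + Finite_Cartesian_Product.mat 1"
    by (simp add: ld rd)
  hence "hs_norm_sq (A - Finite_Cartesian_Product.mat 1) = trace (A ** A - A - A + Finite_Cartesian_Product.mat 1)"
    unfolding hs_norm_sq_def t by simp
  also have "trace (A ** A - A - A + Finite_Cartesian_Product.mat 1) = trace (A ** A) - trace A - trace A + trace (Finite_Cartesian_Product.mat 1 :: real^'n^'n)"
    by (simp only: trace_add trace_sub)
  finally show ?thesis by (simp add: trace_I)
qed

lemma H3:
  fixes A :: "'a::comm_ring_1^'n^'n"
  assumes h: "bij_betw h {..<CARD('n)} (UNIV::'n set)"
  shows "Determinants.det A = (\<Sum>p\<in>{p. p permutes {..<CARD('n)}}. of_int (sign p) * (\<Prod>i<CARD('n). A $ h i $ h (p i)))"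
proof -
  let ?N = "{..<CARD('n)}"
  define g where "g = inv_into ?N h"
  have bg: "bij_betw g UNIV ?N" unfolding g_def by (rule bij_betw_inv_into[OF h])
  have gh: "g (h x) = x" if "x \<in> ?N" for x unfolding g_def using h that by (simp add: bij_betw_inv_into_left)
  have hg: "h (g y) = y" for y unfolding g_def using h by (simp add: bij_betw_inv_into_right)
  have injh: "inj_on h ?N" using h by (simp add: bij_betw_def)
  define \<phi> where "\<phi> p = map_permutation ?N h p" for p
  define \<psi> where "\<psi> q = map_permutation UNIV g q" for q
  have bij: "bij_betw \<phi> {p. p permutes ?N} {q. q permutes (UNIV::'n set)}"
  proof (rule bij_betw_byWitness[where f'=\<psi>])
    show "\<forall>p\<in>{p. p permutes ?N}. \<psi> (\<phi> p) = p"
      unfolding \<phi>_def \<psi>_def using map_permutation_compose_inv[OF h _ gh] by blast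
    show "\<forall>q\<in>{q. q permutes (UNIV::'n set)}. \<phi> (\<psi> q) = q"
      unfolding \<phi>_def \<psi>_def using map_permutation_compose_inv[OF bg _ hg] by blast
    show "\<phi> ` {p. p permutes ?N} \<subseteq> {q. q permutes UNIV}"
      unfolding \<phi>_def using map_permutation_permutes[OF h] by blast
    show "\<psi> ` {q. q permutes UNIV} \<subseteq> {p. p permutes ?N}"
      unfolding \<psi>_def using map_permutation_permutes[OF bg] by blast
  qed
  have "Determinants.det A = (\<Sum>q\<in>{q. q permutes (UNIV::'n set)}. of_int (sign q) * (\<Prod>a\<in>UNIV. A $ a $ q a))"
    unfolding Determinants.det_def by simp
  also have "\<dots> = (\<Sum>p\<in>{p. p permutes ?N}. of_int (sign (\<phi> p)) * (\<Prod>a\<in>UNIV. A $ a $ \<phi> p a))"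
    by (rule sum.reindex_bij_betw[OF bij, symmetric])
  also have "\<dots> = (\<Sum>p\<in>{p. p permutes ?N}. of_int (sign p) * (\<Prod>i<CARD('n). A $ h i $ h (p i)))"
  proof (rule sum.cong[OF refl])
    fix p assume "p \<in> {p. p permutes ?N}"
    hence p: "p permutes ?N" by simp
    have "sign (\<phi> p) = sign p" unfolding \<phi>_def by (rule sign_map_permutation[OF injh p]) simp
    moreover have "(\<Prod>a\<in>UNIV. A $ a $ \<phi> p a) = (\<Prod>i<CARD('n). A $ h i $ \<phi> p (h i))"
      by (rule prod.reindex_bij_betw[OF h, symmetric])
    moreover have "(\<Prod>i<CARD('n). A $ h i $ \<phi> p (h i)) = (\<Prod>i<CARD('n). A $ h i $ h (p i))"
      unfolding \<phi>_def by (intro prod.cong refl) (simp add: map_permutation_apply[OF injh])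
    ultimately show "of_int (sign (\<phi> p)) * (\<Prod>a\<in>UNIV. A $ a $ \<phi> p a) = of_int (sign p) * (\<Prod>i<CARD('n). A $ h i $ h (p i))"
      by simp
  qed
  finally show ?thesis .
qed


theorem propositionA1:
  fixes A :: "real^'n^'n" and \<eta> :: real
  assumes "CARD('n) \<ge> 2"
    and "0 < \<eta>" and "\<eta> \<le> 1/4"
    and "Finite_Cartesian_Product.transpose A = A"
    and "psd A"
    and "Determinants.det A \<ge> (1 - sqrt \<eta>)^2"
    and "trace A \<le> real CARD('n) * (1 + \<eta>) powr (2 / real CARD('n))"
  shows "hs_norm_sq (A - Finite_Cartesian_Product.mat 1) \<le>
    4 * (real CARD('n) - 1)^2 * sqrt \<eta> * (1 + (real CARD('n) + 10) / real CARD('n) * sqrt \<eta>)"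
proof -
  note as = assms
  obtain h where h0: "bij_betw h {0..<card (UNIV::'n set)} (UNIV::'n set)"
    using ex_bij_betw_nat_finite[of "UNIV::'n set"] by auto
  have h: "bij_betw h {..<CARD('n)} (UNIV::'n set)" using h0 by (simp add: lessThan_atLeast0)
  define a where "a i j = A $ h i $ h j" for i j
  have sym: "a i j = a j i" if "i < CARD('n)" "j < CARD('n)" for i j
  proof -
    have "Finite_Cartesian_Product.transpose A $ h i $ h j = A $ h j $ h i"
      by (simp add: transpose_def)
    thus ?thesis unfolding a_def using as(4) by simp
  qed
  have psd': "0 \<le> (\<Sum>i<CARD('n). \<Sum>j<CARD('n). w i * a i j * w j)" for w :: "nat \<Rightarrow> real"
    unfolding a_def by (rule H4[OF h as(5)])
  obtain x :: "nat \<Rightarrow> real" where x0: "\<forall>i<CARD('n). 0 \<le> x i"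
    and xs: "(\<Sum>i<CARD('n). x i) = (\<Sum>i<CARD('n). a i i)"
    and xp: "(\<Prod>i<CARD('n). x i) = (\<Sum>p\<in>{p. p permutes {..<CARD('n)}}. of_int (sign p) * (\<Prod>i<CARD('n). a i (p i)))"
    and xq: "(\<Sum>i<CARD('n). (x i)^2) = (\<Sum>i<CARD('n). \<Sum>k<CARD('n). a i k * a k i)"
    using spectral_data[of "CARD('n)" a, OF sym psd'] by blast
  have tr: "trace A = (\<Sum>i<CARD('n). x i)" unfolding xs a_def by (rule H1[OF h])
  have dt: "Determinants.det A = (\<Prod>i<CARD('n). x i)" unfolding xp a_def by (rule H3[OF h])
  have tq: "trace (A ** A) = (\<Sum>i<CARD('n). (x i)^2)" unfolding xq a_def by (rule H2[OF h])
  have core: "(\<Sum>i<CARD('n). (x i - 1)^2) \<le> 4 * (real CARD('n) - 1)^2 * sqrt \<eta> * (1 + (real CARD('n) + 10) / real CARD('n) * sqrt \<eta>)"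
    by (rule real_core[OF as(1) as(2) as(3)]) (use x0 as(6) as(7) dt tr in auto)
  have "hs_norm_sq (A - Finite_Cartesian_Product.mat 1) = trace (A ** A) - 2 * trace A + real CARD('n)"
    by (rule H6[OF as(4)])
  also have "\<dots> = (\<Sum>i<CARD('n). (x i - 1)^2)"
    unfolding tq tr by (simp add: power2_diff sum.distrib sum_subtractf sum_distrib_left)
  finally show ?thesis using core by simp
qed

end
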